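(* Let $\Phi$ be a channel matrix whose rows $P^1,P^2,P^3\in\Delta^n$ are in general position, let $Q^0$ be the equidistant point from $P^1,P^2,P^3$ and $\boldsymbol\lambda^0$ its barycentric coordinate about $P^1,P^2,P^3$. If $\lambda^0_1,\lambda^0_2,\lambda^0_3\ge0$, then the output distribution achieving the channel capacity is $Q^\ast=Q^0$ and the channel capacity is $C=D(P^1\|Q^0)$.
   Context: $\Delta^n=\{Q:Q_j>0,\sum_jQ_j=1\}$, $\bar\Delta^m=\{\boldsymbol\lambda:\lambda_i\ge0,\sum_i\lambda_i=1\}$; $D(Q\|Q')=\sum_jQ_j\log(Q_j/Q'_j)$. Rows are in general position if $P^2-P^1,\dots,P^m-P^1$ are linearly independent. $L(S^1,\dots,S^r)=\{\sum_i\lambda_iS^i:\sum_i\lambda_i=1\}\cap\Delta^n$. The barycentric coordinate of $Q\in L(P^1,\dots,P^m)$ is the unique $\boldsymbol\lambda$ with $\sum_i\lambda_i=1$, $Q=\sum_i\lambda_iP^i$. The equidistant point is the unique $Q^0\in L(P^1,\dots,P^m)$ with $D(P^1\|Q^0)=\dots=D(P^m\|Q^0)$. Mutual information $I(\boldsymbol\lambda,\Phi)=\sum_{i,j}\lambda_iP^i_j\log(P^i_j/Q_j)$ with $Q=\boldsymbol\lambda\Phi$; capacity $C=\max_{\boldsymbol\lambda\in\bar\Delta^m}I(\boldsymbol\lambda,\Phi)$; the capacity-achieving output distribution is $Q^\ast=\boldsymbol\lambda^\ast\Phi$ for a maximizer $\boldsymbol\lambda^\ast$ (unique). *)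

theory Defs
  imports "HOL-Analysis.Analysis"
begin

text \<open>Distributions on the output alphabet {0..<n} are functions nat => real.
  A channel matrix with m rows is P :: nat => nat => real, row i (i in {1..m}) being P i.\<close>

definition open_simplex :: "nat \<Rightarrow> (nat \<Rightarrow> real) \<Rightarrow> bool" where
  "open_simplex n Q \<longleftrightarrow> (\<forall>j<n. Q j > 0) \<and> (\<Sum>j<n. Q j) = 1"

definition closed_simplex :: "nat \<Rightarrow> (nat \<Rightarrow> real) \<Rightarrow> bool" where
  "closed_simplex m lam \<longleftrightarrow> (\<forall>i\<in>{1..m}. lam i \<ge> 0) \<and> (\<Sum>i=1..m. lam i) = 1"

definition KL :: "nat \<Rightarrow> (nat \<Rightarrow> real) \<Rightarrow> (nat \<Rightarrow> real) \<Rightarrow> real" where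
  "KL n Q Q' = (\<Sum>j<n. Q j * ln (Q j / Q' j))"

definition outdist :: "nat \<Rightarrow> (nat \<Rightarrow> nat \<Rightarrow> real) \<Rightarrow> (nat \<Rightarrow> real) \<Rightarrow> nat \<Rightarrow> real" where
  "outdist m P lam = (\<lambda>j. \<Sum>i=1..m. lam i * P i j)"

definition general_position :: "nat \<Rightarrow> nat \<Rightarrow> (nat \<Rightarrow> nat \<Rightarrow> real) \<Rightarrow> bool" where
  "general_position n m P \<longleftrightarrow>
     (\<forall>c :: nat \<Rightarrow> real. (\<forall>j<n. (\<Sum>i=2..m. c i * (P i j - P 1 j)) = 0) \<longrightarrow> (\<forall>i\<in>{2..m}. c i = 0))"

definition barycentric :: "nat \<Rightarrow> nat \<Rightarrow> (nat \<Rightarrow> nat \<Rightarrow> real) \<Rightarrow> (nat \<Rightarrow> real) \<Rightarrow> (nat \<Rightarrow> real) \<Rightarrow> bool" where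
  "barycentric n m P Q lam \<longleftrightarrow> (\<Sum>i=1..m. lam i) = 1 \<and> (\<forall>j<n. Q j = outdist m P lam j)"

definition equidistant_point :: "nat \<Rightarrow> nat \<Rightarrow> (nat \<Rightarrow> nat \<Rightarrow> real) \<Rightarrow> (nat \<Rightarrow> real) \<Rightarrow> bool" where
  "equidistant_point n m P Q \<longleftrightarrow> open_simplex n Q \<and> (\<exists>lam. barycentric n m P Q lam)
     \<and> (\<forall>i\<in>{1..m}. KL n (P i) Q = KL n (P 1) Q)"

definition mutual_info :: "nat \<Rightarrow> nat \<Rightarrow> (nat \<Rightarrow> nat \<Rightarrow> real) \<Rightarrow> (nat \<Rightarrow> real) \<Rightarrow> real" where
  "mutual_info n m P lam =
     (\<Sum>i=1..m. \<Sum>j<n. lam i * P i j * ln (P i j / outdist m P lam j))"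

definition capacity :: "nat \<Rightarrow> nat \<Rightarrow> (nat \<Rightarrow> nat \<Rightarrow> real) \<Rightarrow> real" where
  "capacity n m P = (SUP lam\<in>{lam. closed_simplex m lam}. mutual_info n m P lam)"

end

theory Submission
  imports Defs
begin

lemma gibbs:
  fixes Q R :: "nat \<Rightarrow> real"
  assumes Qp: "\<forall>j<n. Q j > 0" and Rp: "\<forall>j<n. R j > 0"
    and Qs: "(\<Sum>j<n. Q j) = 1" and Rs: "(\<Sum>j<n. R j) = 1"
  shows "KL n Q R \<ge> 0" and "KL n Q R = 0 \<Longrightarrow> \<forall>j<n. Q j = R j"
proof -
  define g where "g j = Q j * (R j / Q j - 1) - Q j * ln (R j / Q j)" for j
  have g0: "g j \<ge> 0" if "j < n" for j
  proof -
    have "ln (R j / Q j) \<le> R j / Q j - 1" using Qp Rp that by (intro ln_le_minus_one) auto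
    moreover have "0 \<le> Q j" using Qp that by (simp add: less_imp_le)
    ultimately have "0 \<le> Q j * (R j / Q j - 1 - ln (R j / Q j))" by (intro mult_nonneg_nonneg) auto
    then show ?thesis unfolding g_def by (simp add: right_diff_distrib)
  qed
  have "(\<Sum>j<n. Q j * (R j / Q j - 1)) = (\<Sum>j<n. R j - Q j)"
    using Qp by (intro sum.cong) (auto simp: field_simps)
  also have "\<dots> = 0" using Qs Rs by (simp add: sum_subtractf)
  finally have A: "(\<Sum>j<n. Q j * (R j / Q j - 1)) = 0" .
  have lnq: "Q j * ln (Q j / R j) = - (Q j * ln (R j / Q j))" if "j < n" for j
    using Qp Rp that by (simp add: ln_div algebra_simps)
  have KLg: "KL n Q R = (\<Sum>j<n. g j)"
    unfolding KL_def g_def using lnq A by (simp add: sum_subtractf sum_negf)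
  show "KL n Q R \<ge> 0" unfolding KLg using g0 by (intro sum_nonneg) auto
  assume "KL n Q R = 0"
  then have "\<forall>j\<in>{..<n}. g j = 0" unfolding KLg using g0
    by (subst sum_nonneg_eq_0_iff[symmetric]) auto
  show "\<forall>j<n. Q j = R j"
  proof (intro allI impI)
    fix j assume j: "j < n"
    with \<open>\<forall>j\<in>{..<n}. g j = 0\<close> have "g j = 0" by auto
    moreover have "Q j \<noteq> 0" using Qp j by auto
    ultimately have "ln (R j / Q j) = R j / Q j - 1" unfolding g_def
      by (simp add: right_diff_distrib[symmetric])
    then have "R j / Q j = 1" using Qp Rp j by (intro ln_eq_minus_one) auto
    then show "Q j = R j" using Qp j by (simp add: field_simps)
  qed
qed

lemma outdist_props:
  assumes rows: "\<forall>i\<in>{1..m}. open_simplex n (P i)"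
    and lam: "closed_simplex m lam"
  shows "\<forall>j<n. outdist m P lam j > 0" "(\<Sum>j<n. outdist m P lam j) = 1"
proof -
  have lnn: "\<forall>i\<in>{1..m}. lam i \<ge> 0" and ls: "(\<Sum>i=1..m. lam i) = 1"
    using lam unfolding closed_simplex_def by auto
  obtain k where k: "k \<in> {1..m}" "lam k > 0"
  proof (rule ccontr)
    assume "\<not> thesis"
    then have "\<forall>i\<in>{1..m}. lam i = 0" using that lnn by force
    then have "(\<Sum>i=1..m. lam i) = 0" by simp
    with ls show False by simp
  qed
  show "\<forall>j<n. outdist m P lam j > 0"
  proof (intro allI impI)
    fix j assume j: "j < n"
    show "outdist m P lam j > 0" unfolding outdist_def
    proof (rule sum_pos2[OF _ k(1)])
      show "0 < lam k * P k j" using k rows j by (auto simp: open_simplex_def)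
      show "\<And>i. i \<in> {1..m} \<Longrightarrow> 0 \<le> lam i * P i j" using rows j lnn
        by (auto simp: open_simplex_def less_imp_le intro!: mult_nonneg_nonneg)
    qed simp
  qed
  have "(\<Sum>j<n. outdist m P lam j) = (\<Sum>i=1..m. lam i * (\<Sum>j<n. P i j))"
    unfolding outdist_def by (subst sum.swap) (simp add: sum_distrib_left)
  also have "\<dots> = (\<Sum>i=1..m. lam i)" using rows by (intro sum.cong) (auto simp: open_simplex_def)
  finally show "(\<Sum>j<n. outdist m P lam j) = 1" using ls by simp
qed

lemma mi_identity:
  assumes rows: "\<forall>i\<in>{1..m}. open_simplex n (P i)"
    and lam: "closed_simplex m lam"
    and R: "open_simplex n R"
  shows "mutual_info n m P lam = (\<Sum>i=1..m. lam i * KL n (P i) R) - KL n (outdist m P lam) R"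
proof -
  let ?Q = "outdist m P lam"
  have Qp: "\<forall>j<n. ?Q j > 0" using outdist_props[OF rows lam] by auto
  have split: "lam i * P i j * ln (P i j / ?Q j) =
      lam i * P i j * ln (P i j / R j) - lam i * P i j * ln (?Q j / R j)"
    if i: "i \<in> {1..m}" and j: "j < n" for i j
  proof -
    have "P i j > 0" using rows i j by (auto simp: open_simplex_def)
    moreover have "R j > 0" using R j by (auto simp: open_simplex_def)
    moreover have "?Q j > 0" using Qp j by auto
    ultimately show ?thesis by (simp add: ln_div algebra_simps)
  qed
  have "mutual_info n m P lam = (\<Sum>i=1..m. \<Sum>j<n. lam i * P i j * ln (P i j / R j))
      - (\<Sum>i=1..m. \<Sum>j<n. lam i * P i j * ln (?Q j / R j))"
  proof -
    have "mutual_info n m P lam = (\<Sum>i=1..m. \<Sum>j<n. lam i * P i j * ln (P i j / R j)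
       - lam i * P i j * ln (?Q j / R j))"
      unfolding mutual_info_def by (intro sum.cong refl) (simp add: split)
    then show ?thesis by (simp add: sum_subtractf)
  qed
  also have "(\<Sum>i=1..m. \<Sum>j<n. lam i * P i j * ln (P i j / R j)) = (\<Sum>i=1..m. lam i * KL n (P i) R)"
    unfolding KL_def by (simp add: sum_distrib_left mult.assoc)
  also have "(\<Sum>i=1..m. \<Sum>j<n. lam i * P i j * ln (?Q j / R j)) = KL n ?Q R"
    unfolding KL_def by (subst sum.swap) (simp add: outdist_def sum_distrib_right)
  finally show ?thesis .
qed

theorem theorem15:
  fixes n :: nat and P :: "nat \<Rightarrow> nat \<Rightarrow> real" and Q0 lam0 :: "nat \<Rightarrow> real"
  assumes rows: "\<forall>i\<in>{1..3}. open_simplex n (P i)"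
    and gp: "general_position n 3 P"
    and eq: "equidistant_point n 3 P Q0"
    and bary: "barycentric n 3 P Q0 lam0"
    and nonneg: "lam0 1 \<ge> 0" "lam0 2 \<ge> 0" "lam0 3 \<ge> 0"
  shows "capacity n 3 P = KL n (P 1) Q0
    \<and> (\<exists>lam. closed_simplex 3 lam \<and> mutual_info n 3 P lam = capacity n 3 P)
    \<and> (\<forall>lam. closed_simplex 3 lam \<and> mutual_info n 3 P lam = capacity n 3 P
              \<longrightarrow> (\<forall>j<n. outdist 3 P lam j = Q0 j))"
proof -
  define d where "d = KL n (P 1) Q0"
  have R: "open_simplex n Q0" and eqd: "\<forall>i\<in>{1..3}. KL n (P i) Q0 = d"
    using eq unfolding equidistant_point_def d_def by blast+
  have key: "mutual_info n 3 P lam = d - KL n (outdist 3 P lam) Q0" if lam: "closed_simplex 3 lam" for lam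
  proof -
    have ls: "(\<Sum>i=1..3. lam i) = 1" using lam by (simp add: closed_simplex_def)
    have "(\<Sum>i=1..3. lam i * KL n (P i) Q0) = (\<Sum>i=1..3. lam i * d)"
      using eqd by (intro sum.cong) auto
    also have "\<dots> = (\<Sum>i=1..3. lam i) * d" by (rule sum_distrib_right[symmetric])
    also have "\<dots> = d" using ls by simp
    finally show ?thesis using mi_identity[OF rows lam R] by simp
  qed
  have Rp: "\<forall>j<n. Q0 j > 0" "(\<Sum>j<n. Q0 j) = 1" using R by (auto simp: open_simplex_def)
  have KLnn: "KL n (outdist 3 P lam) Q0 \<ge> 0" if lam: "closed_simplex 3 lam" for lam
    using gibbs(1)[OF _ Rp(1) _ Rp(2)] outdist_props[OF rows lam] by auto
  have lam0: "closed_simplex 3 lam0"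
  proof -
    have s: "{1..3::nat} = {1,2,3}" by auto
    show ?thesis using bary nonneg unfolding closed_simplex_def barycentric_def s by auto
  qed
  have "KL n (outdist 3 P lam0) Q0 = KL n Q0 Q0"
    using bary unfolding KL_def barycentric_def by (intro sum.cong) auto
  also have "\<dots> = 0" unfolding KL_def
  proof (rule sum.neutral, intro ballI)
    fix j assume "j \<in> {..<n}"
    then have "Q0 j > 0" using Rp by auto
    then show "Q0 j * ln (Q0 j / Q0 j) = 0" by simp
  qed
  finally have m0: "mutual_info n 3 P lam0 = d" using key[OF lam0] by simp
  have cap: "capacity n 3 P = d"
    unfolding capacity_def
  proof (rule cSup_eq_maximum)
    show "d \<in> mutual_info n 3 P ` {lam. closed_simplex 3 lam}"
      using lam0 m0 by (metis (mono_tags, lifting) image_eqI mem_Collect_eq)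
    fix x assume "x \<in> mutual_info n 3 P ` {lam. closed_simplex 3 lam}"
    then obtain lam where "closed_simplex 3 lam" "x = mutual_info n 3 P lam" by auto
    then show "x \<le> d" using key KLnn by fastforce
  qed
  show ?thesis
  proof (intro conjI)
    show "capacity n 3 P = KL n (P 1) Q0" using cap d_def by simp
    show "\<exists>lam. closed_simplex 3 lam \<and> mutual_info n 3 P lam = capacity n 3 P"
      using lam0 m0 cap by auto
    show "\<forall>lam. closed_simplex 3 lam \<and> mutual_info n 3 P lam = capacity n 3 P
              \<longrightarrow> (\<forall>j<n. outdist 3 P lam j = Q0 j)"
    proof (rule allI, rule impI)
      fix lam assume h: "closed_simplex 3 lam \<and> mutual_info n 3 P lam = capacity n 3 P"
      then have "KL n (outdist 3 P lam) Q0 = 0" using key cap by auto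
      then show "\<forall>j<n. outdist 3 P lam j = Q0 j"
        using gibbs(2)[OF _ Rp(1) _ Rp(2)] outdist_props[OF rows] h by auto
    qed
  qed
qed

end
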